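(* Let $0<q<1/2$, $p=1-q$, $\lambda=q/p$. For each integer $z\ge2$ let $\kappa(z)$ be the unique $\kappa\in(0,+\infty)$ satisfying $$\sum_{j=1}^{z-1}\left(\prod_{i=1}^{j}\left(1-\frac iz\right)\right)\frac{1}{\kappa^j}=\frac{\lambda}{1-\lambda}.$$ Then $$\lim_{z\to+\infty}\kappa(z)=\lambda^{-1}=\frac pq.$$
   Context: The left-hand side is strictly decreasing in $\kappa$ from $+\infty$ to $0$, so $\kappa(z)$ is well defined. $\kappa(z)$ is the unique point where the second derivative in $\kappa$ of the conditional double-spend success probability $P(z,\kappa)=1-Q(z,\kappa zq/p)+(q/p)^ze^{\kappa z(p-q)/p}Q(z,\kappa z)$ changes sign ($Q$ the regularized upper incomplete gamma function). *)

theory Defs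
  imports "HOL-Analysis.Analysis"
begin

definition kappa_lhs :: "nat \<Rightarrow> real \<Rightarrow> real" where
  "kappa_lhs z \<kappa> = (\<Sum>j=1..z-1. (\<Prod>i=1..j. 1 - real i / real z) * (1 / \<kappa> ^ j))"

definition kappa_z :: "real \<Rightarrow> nat \<Rightarrow> real" where
  "kappa_z lam z = (THE \<kappa>. 0 < \<kappa> \<and> kappa_lhs z \<kappa> = lam / (1 - lam))"

end

theory Submission
  imports Defs
begin

lemma geom_sum1:
  fixes x :: real
  shows "(1 - x) * (\<Sum>j=1..n. x^j) = x - x^(Suc n)"
proof (induction n)
  case (Suc n)
  have "(\<Sum>j=1..Suc n. x^j) = (\<Sum>j=1..n. x^j) + x^Suc n" by simp
  then have "(1 - x) * (\<Sum>j=1..Suc n. x^j) = (1-x) * (\<Sum>j=1..n. x^j) + (1-x)*x^Suc n"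
    by (simp add: algebra_simps)
  also have "\<dots> = x - x^Suc (Suc n)" using Suc.IH by (simp add: algebra_simps)
  finally show ?case .
qed simp

lemma coef_nonneg:
  assumes "j \<le> z - 1"
  shows "0 \<le> (\<Prod>i=1..j. 1 - real i / real z)"
proof (rule prod_nonneg)
  fix i assume "i \<in> {1..j}"
  then have "i < z" using assms by auto
  then show "0 \<le> 1 - real i / real z" by (simp add: field_simps)
qed

lemma coef_le1:
  assumes "j \<le> z - 1"
  shows "(\<Prod>i=1..j. 1 - real i / real z) \<le> 1"
proof (rule prod_le_1)
  fix i assume "i \<in> {1..j}"
  then have "i < z" "0 < i" using assms by auto
  then show "0 \<le> 1 - real i / real z \<and> 1 - real i / real z \<le> 1" by (simp add: field_simps)
qed

lemma lhs_strict_anti: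
  assumes z: "2 \<le> z" and x: "0 < x" and xy: "x < y"
  shows "kappa_lhs z y < kappa_lhs z x"
  unfolding kappa_lhs_def
proof (rule sum_strict_mono_ex1)
  show "finite {1..z-1}" by simp
  show "\<forall>j\<in>{1..z - 1}. (\<Prod>i = 1..j. 1 - real i / real z) * (1 / y ^ j)
        \<le> (\<Prod>i = 1..j. 1 - real i / real z) * (1 / x ^ j)"
  proof
    fix j assume j: "j \<in> {1..z-1}"
    have "1 / y ^ j \<le> 1 / x ^ j"
      using x xy by (intro divide_left_mono power_mono) auto
    then show "(\<Prod>i = 1..j. 1 - real i / real z) * (1 / y ^ j)
        \<le> (\<Prod>i = 1..j. 1 - real i / real z) * (1 / x ^ j)"
      using coef_nonneg[of j z] j by (intro mult_left_mono) auto
  qed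
  have "(1 - 1 / real z) * (1 / y) < (1 - 1 / real z) * (1 / x)"
    using z x xy by (intro mult_strict_left_mono) (auto simp: field_simps)
  then show "\<exists>j\<in>{1..z - 1}. (\<Prod>i = 1..j. 1 - real i / real z) * (1 / y ^ j)
        < (\<Prod>i = 1..j. 1 - real i / real z) * (1 / x ^ j)"
    using z by (intro bexI[of _ 1]) auto
qed

lemma lhs_le_geom:
  assumes "0 < k"
  shows "kappa_lhs z k \<le> (\<Sum>j=1..z-1. (1/k)^j)"
  unfolding kappa_lhs_def
proof (rule sum_mono)
  fix j assume j: "j \<in> {1..z-1}"
  have "(\<Prod>i = 1..j. 1 - real i / real z) * (1 / k ^ j) \<le> 1 * (1 / k ^ j)"
    using coef_le1[of j z] j assms by (intro mult_right_mono) auto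
  then show "(\<Prod>i = 1..j. 1 - real i / real z) * (1 / k ^ j) \<le> (1 / k) ^ j"
    by (simp add: power_one_over)
qed

lemma lhs_upper:
  assumes "0 < lam" "lam < 1"
  shows "kappa_lhs z (1/lam) < lam / (1 - lam)"
proof -
  have "kappa_lhs z (1/lam) \<le> (\<Sum>j=1..z-1. lam^j)"
    using lhs_le_geom[of "1/lam" z] assms by simp
  also have "\<dots> = (lam - lam^(Suc (z-1))) / (1 - lam)"
    using geom_sum1[of lam "z-1"] assms by (simp add: field_simps)
  also have "\<dots> < lam / (1 - lam)"
    using assms by (intro divide_strict_right_mono) auto
  finally show ?thesis .
qed

lemma lhs_cont: "continuous_on {a..b} (kappa_lhs z)" if "0 < a"
  unfolding kappa_lhs_def using that
  by (intro continuous_intros) auto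

lemma lhs_lower_eventually:
  assumes lam: "0 < lam" "lam < 1" and k: "1 < k" "k < 1/lam"
  shows "eventually (\<lambda>z. lam / (1 - lam) < kappa_lhs z k) sequentially"
proof -
  define x where "x = 1/k"
  have x: "0 < x" "x < 1" "lam < x" using k lam by (auto simp: x_def field_simps)
  have "lam / (1 - lam) < x / (1 - x)"
    using x lam by (simp add: field_simps)
  moreover have "(\<lambda>n. (x - x^(Suc n)) / (1 - x)) \<longlonglongrightarrow> (x - 0) / (1 - x)"
    using x by (intro tendsto_intros LIMSEQ_power_zero[THEN LIMSEQ_Suc]) auto
  ultimately have "eventually (\<lambda>n. lam / (1 - lam) < (x - x^(Suc n)) / (1 - x)) sequentially"
    by (simp add: order_tendstoD)
  then obtain N where N: "lam / (1 - lam) < (x - x^(Suc N)) / (1 - x)"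
    using eventually_sequentially by auto
  have SN: "(\<Sum>j=1..N. x^j) = (x - x^(Suc N)) / (1 - x)"
    using geom_sum1[of x N] x by (simp add: field_simps)
  have lim: "(\<lambda>z. \<Sum>j=1..N. (\<Prod>i=1..j. 1 - real i / real z) * (1 / k ^ j))
     \<longlonglongrightarrow> (\<Sum>j=1..N. (\<Prod>i=1..j. 1 - 0) * (1 / k ^ j))"
    by (intro tendsto_intros lim_const_over_n)
  have "(\<Sum>j=1..N. (\<Prod>i=1..j. (1::real) - 0) * (1 / k ^ j)) = (\<Sum>j=1..N. x^j)"
    by (simp add: x_def power_one_over)
  then have "eventually (\<lambda>z. lam / (1 - lam) < (\<Sum>j=1..N. (\<Prod>i=1..j. 1 - real i / real z) * (1 / k ^ j))) sequentially"
    using order_tendstoD(1)[OF lim] N SN by simp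
  moreover have "eventually (\<lambda>z. N \<le> z - 1) sequentially"
    unfolding eventually_sequentially by (intro exI[of _ "N+1"]) auto
  ultimately show ?thesis
  proof eventually_elim
    case (elim z)
    have "(\<Sum>j=1..N. (\<Prod>i=1..j. 1 - real i / real z) * (1 / k ^ j)) \<le> kappa_lhs z k"
      unfolding kappa_lhs_def
    proof (rule sum_mono2)
      fix j assume "j \<in> {1..z-1} - {1..N}"
      then show "0 \<le> (\<Prod>i=1..j. 1 - real i / real z) * (1 / k ^ j)"
        using coef_nonneg[of j z] k by auto
    qed (use elim in auto)
    then show ?case using elim by linarith
  qed
qed

lemma kappa_bounds:
  assumes lam: "0 < lam" "lam < 1" and k: "1 < k" "k < 1/lam"
  shows "eventually (\<lambda>z. k < kappa_z lam z \<and> kappa_z lam z < 1/lam) sequentially"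
  using lhs_lower_eventually[OF assms] eventually_ge_at_top[of 2]
proof eventually_elim
  case (elim z)
  let ?c = "lam / (1 - lam)"
  have up: "kappa_lhs z (1/lam) < ?c" using lhs_upper lam by blast
  have "k \<le> 1/lam" using k by simp
  from IVT2'[of "kappa_lhs z" "1/lam" ?c k, OF less_imp_le[OF up] less_imp_le[OF elim(1)] this lhs_cont]
  obtain t where t: "k \<le> t" "t \<le> 1/lam" "kappa_lhs z t = ?c" using k by auto
  have uniq: "s = t" if "0 < s" "kappa_lhs z s = ?c" for s
  proof (rule ccontr)
    assume "s \<noteq> t"
    then consider "s < t" | "t < s" by linarith
    then show False
    proof cases
      case 1
      have "kappa_lhs z t < kappa_lhs z s" by (rule lhs_strict_anti[OF elim(2) that(1) 1])
      then show False using that(2) t(3) by simp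
    next
      case 2
      have "0 < t" using t k by simp
      have "kappa_lhs z s < kappa_lhs z t" by (rule lhs_strict_anti[OF elim(2) \<open>0 < t\<close> 2])
      then show False using that(2) t(3) by simp
    qed
  qed
  have "kappa_z lam z = t"
    unfolding kappa_z_def
  proof (rule the_equality)
    show "0 < t \<and> kappa_lhs z t = ?c" using t k by simp
  next
    fix s assume "0 < s \<and> kappa_lhs z s = ?c"
    then show "s = t" using uniq by blast
  qed
  moreover have "t \<noteq> k" using t elim(1) by auto
  moreover have "t \<noteq> 1/lam" using t up by auto
  ultimately show ?case using t by auto
qed

lemma avg: "(1::real) < M \<Longrightarrow> 1 < (1+M)/2 \<and> (1+M)/2 < M" by (auto simp: field_simps)

theorem mainTheorem12:
  fixes q p lam :: real
  assumes "0 < q" and "q < 1/2" and "p = 1 - q" and "lam = q / p"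
  shows "((\<lambda>z. kappa_z lam z) \<longlongrightarrow> p / q) sequentially"
proof -
  have pq: "q < p" "0 < p" using assms by auto
  have lam: "0 < lam" "lam < 1" using assms(1,4) pq by auto
  have L: "p / q = 1 / lam" "1 < 1 / lam" using assms(1,4) pq lam by (auto simp: field_simps)
  show ?thesis
    unfolding L(1)
  proof (rule order_tendstoI)
    fix a assume a: "a < 1/lam"
    define k where "k = max a ((1 + 1/lam)/2)"
    have m1: "1 < (1 + 1/lam)/2" using avg[OF L(2)] by blast
    have m2: "(1 + 1/lam)/2 < 1/lam" using avg[OF L(2)] by blast
    note m = m1 m2
    have "1 < k" "k < 1/lam" unfolding k_def less_max_iff_disj max_less_iff_conj using m a by auto
    from kappa_bounds[OF lam this] show "eventually (\<lambda>z. a < kappa_z lam z) sequentially"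
      by (rule eventually_mono) (auto simp: k_def)
  next
    fix a assume a: "1/lam < a"
    define k where "k = (1 + 1/lam)/2"
    have m1: "1 < k" using avg[OF L(2)] unfolding k_def by blast
    have m2: "k < 1/lam" using avg[OF L(2)] unfolding k_def by blast
    note m1 m2
    from kappa_bounds[OF lam this] show "eventually (\<lambda>z. kappa_z lam z < a) sequentially"
      by (rule eventually_mono) (use a in auto)
  qed
qed

end
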